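(* Let $\Delta$ be a finite set of defaults such that $\Delta^\rightarrow$ is consistent, and suppose $\Delta$ has Z-partition $(\Delta_0,\ldots,\Delta_n)$. Then for all $\theta,\phi\in L$: $\theta\mid\!\sim^\Delta_{lex}\phi$ if and only if $\phi\in Bel\big((\cdots((\preceq_\emptyset*\preceq_{\Delta^\rightarrow_0})*\preceq_{\Delta^\rightarrow_1})*\cdots*\preceq_{\Delta^\rightarrow_n})*\preceq_{\{\theta\}}\big)$.
   Context: $L$ is a propositional language built from a finite set of propositional variables with the connectives $\neg,\wedge,\vee,\rightarrow,\top,\bot$; $W$ is the finite set of propositional worlds. For $\theta\in L$, $S_\theta=\{w\in W\mid w\models\theta\}$; $E\models\phi$ means $\bigcap_{\theta\in E}S_\theta\subseteq S_\phi$; $\models\phi$ means $\emptyset\models\phi$; $E$ is consistent iff $E\not\models\bot$. Defaults: expressions $\lambda\Rightarrow\chi$ with $\lambda,\chi\in L$; for a set $\Gamma$ of defaults $\Gamma^\rightarrow=\{\lambda\rightarrow\chi\mid\lambda\Rightarrow\chi\in\Gamma\}$. $\lambda\Rightarrow\chi$ is tolerated by $\Gamma$ iff $\{\lambda\wedge\chi\}\cup\Gamma^\rightarrow$ is consistent. Z-partition of $\Delta$: $\Delta_0$ is the set of defaults of $\Delta$ tolerated by $\Delta$; for $i\ge1$, $\Delta_i$ is the set of defaults of $\Delta\setminus(\Delta_0\cup\cdots\cup\Delta_{i-1})$ tolerated by $\Delta\setminus(\Delta_0\cup\cdots\cup\Delta_{i-1})$; stop at the first $n$ with $\Delta_0\cup\cdots\cup\Delta_n=\Delta$.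 Lexicographic closure: for $A,B\subseteq\Delta$, with $A_i=A\cap\Delta_i$, $B_i=B\cap\Delta_i$, $A\ll_{lex}B$ iff there is $i$ with $|A_i|<|B_i|$ and $|A_j|=|B_j|$ for all $j>i$. $\theta\mid\!\sim^\Delta_{lex}\phi$ iff for every $\Gamma\subseteq\Delta$ such that $\Gamma^\rightarrow\cup\{\theta\}$ is consistent and $\Gamma$ is $\ll_{lex}$-maximal among such subsets, $\Gamma^\rightarrow\cup\{\theta\}\models\phi$. E-relation: a relation $\preceq\subseteq L\times L$ such that for all $\theta,\phi,\psi$: (E1) transitivity; (E2) $\theta\models\phi$ implies $\theta\preceq\phi$; (E3) $\theta\preceq\theta\wedge\phi$ or $\phi\preceq\theta\wedge\phi$; (E4) if $\bot\prec\psi$ for some $\psi$, then $\theta\preceq\phi$ for all $\theta$ implies $\models\phi$; $\prec$ is the strict part. $Bel(\preceq)=\{\theta\mid\bot\prec\theta\}$ if $\bot\prec\theta$ for some $\theta$, else $Bel(\preceq)=L$. Sequences: finite sequences $\vec{\mathcal U}=(\mathcal U_0,\ldots,\mathcal U_k)$ of mutually disjoint subsets of $W$ (components may be empty, possibly repeatedly). $\mathrm{rank}^{\vec{\mathcal U}}(\theta)$ is the least $i$ with $\mathcal U_i\cap S_\theta\neq\emptyset$, $\infty$ if none. $\theta\mid\!\sim_{\vec{\mathcal U}}\phi$ iff $\mathrm{rank}^{\vec{\mathcal U}}(\theta)<\mathrm{rank}^{\vec{\mathcal U}}(\theta\wedge\neg\phi)$ or $\mathrm{rank}^{\vec{\mathcal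 U}}(\theta)=\infty$. $\vec{\mathcal U}$ is full iff $\bigcup_i\mathcal U_i=W$, empty iff $\bigcup_i\mathcal U_i=\emptyset$; $\Upsilon$ is the set of full or empty sequences. For $\vec{\mathcal U}\in\Upsilon$, $\theta\preceq_{\vec{\mathcal U}}\phi$ iff (not $\neg\theta\vee\neg\phi\mid\!\sim_{\vec{\mathcal U}}\theta$) or $\neg\phi\mid\!\sim_{\vec{\mathcal U}}\bot$. Sequence revision: if $\vec{\mathcal U}$ is full, $\vec{\mathcal U}*\vec{\mathcal V}=(\mathcal U_0\cap\mathcal V_0,\ldots,\mathcal U_k\cap\mathcal V_0,\ \ldots,\ \mathcal U_0\cap\mathcal V_m,\ldots,\mathcal U_k\cap\mathcal V_m)$ for $\vec{\mathcal V}=(\mathcal V_0,\ldots,\mathcal V_m)$; otherwise $\vec{\mathcal U}*\vec{\mathcal V}=\vec{\mathcal V}$. Revision of E-relations: every E-relation equals $\preceq_{\vec{\mathcal U}}$ for some $\vec{\mathcal U}\in\Upsilon$, and $\preceq_K*\preceq_E:=\preceq_{\vec{\mathcal U}*\vec{\mathcal V}}$ for any $\vec{\mathcal U},\vec{\mathcal V}\in\Upsilon$ with $\preceq_K=\preceq_{\vec{\mathcal U}}$, $\preceq_E=\preceq_{\vec{\mathcal V}}$ (independent of the choice). Relation generated by a finite set $E\subseteq L$: $\theta\prec_E\phi$ iff $E\not\models\bot$, $\not\models\theta$, and for every $E'\subseteq E$ with $E'\cup\{\neg\phi\}$ consistent there is $E''\subseteq E$ with $|E'|<|E''|$ and $E''\cup\{\neg\theta\}$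 consistent; $\theta\preceq_E\phi$ iff not $\phi\prec_E\theta$. ($\preceq_E$ is an E-relation.) *)

theory Defs
  imports Main "HOL-Library.Extended_Nat"
begin

datatype 'v form =
    Var 'v | Neg "'v form" | And "'v form" "'v form" | Or "'v form" "'v form"
  | Imp "'v form" "'v form" | Top | Bot

type_synonym 'v world = "'v \<Rightarrow> bool"

fun sat :: "'v world \<Rightarrow> 'v form \<Rightarrow> bool" where
  "sat w (Var p) = w p"
| "sat w (Neg a) = (\<not> sat w a)"
| "sat w (And a b) = (sat w a \<and> sat w b)"
| "sat w (Or a b) = (sat w a \<or> sat w b)"
| "sat w (Imp a b) = (sat w a \<longrightarrow> sat w b)"
| "sat w Top = True"
| "sat w Bot = False"

text \<open>The set W of worlds is UNIV :: 'v world set (finite when 'v is finite).\<close>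

definition models :: "'v form \<Rightarrow> 'v world set" where
  "models \<theta> = {w. sat w \<theta>}"

definition entails :: "'v form set \<Rightarrow> 'v form \<Rightarrow> bool" where
  "entails E \<phi> \<longleftrightarrow> (\<Inter>\<theta>\<in>E. models \<theta>) \<subseteq> models \<phi>"

definition valid :: "'v form \<Rightarrow> bool" where
  "valid \<phi> \<longleftrightarrow> entails {} \<phi>"

definition consistent :: "'v form set \<Rightarrow> bool" where
  "consistent E \<longleftrightarrow> \<not> entails E Bot"

type_synonym 'v default = "'v form \<times> 'v form"

definition mat :: "'v default set \<Rightarrow> 'v form set" where
  "mat \<Gamma> = {Imp l c | l c. (l, c) \<in> \<Gamma>}"

definition tolerated :: "'v default set \<Rightarrow> 'v default \<Rightarrow> bool" where
  "tolerated \<Gamma> d \<longleftrightarrow> consistent ({And (fst d) (snd d)} \<union> mat \<Gamma>)"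

text \<open>zrest Delta i = Delta minus (Delta_0 union ... union Delta_(i-1)).\<close>
primrec zrest :: "'v default set \<Rightarrow> nat \<Rightarrow> 'v default set" where
  "zrest \<Delta> 0 = \<Delta>"
| "zrest \<Delta> (Suc i) = zrest \<Delta> i - {d \<in> zrest \<Delta> i. tolerated (zrest \<Delta> i) d}"

definition zlayer :: "'v default set \<Rightarrow> nat \<Rightarrow> 'v default set" where
  "zlayer \<Delta> i = {d \<in> zrest \<Delta> i. tolerated (zrest \<Delta> i) d}"

definition has_zpartition :: "'v default set \<Rightarrow> nat \<Rightarrow> bool" where
  "has_zpartition \<Delta> n \<longleftrightarrow>
     (\<Union>i\<le>n. zlayer \<Delta> i) = \<Delta> \<and> (\<forall>m<n. (\<Union>i\<le>m. zlayer \<Delta> i) \<noteq> \<Delta>)"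

definition lex_less :: "'v default set \<Rightarrow> 'v default set \<Rightarrow> 'v default set \<Rightarrow> bool" where
  "lex_less \<Delta> A B \<longleftrightarrow>
     (\<exists>i. card (A \<inter> zlayer \<Delta> i) < card (B \<inter> zlayer \<Delta> i) \<and>
          (\<forall>j>i. card (A \<inter> zlayer \<Delta> j) = card (B \<inter> zlayer \<Delta> j)))"

definition lex_entails :: "'v default set \<Rightarrow> 'v form \<Rightarrow> 'v form \<Rightarrow> bool" where
  "lex_entails \<Delta> \<theta> \<phi> \<longleftrightarrow>
     (\<forall>\<Gamma>. \<Gamma> \<subseteq> \<Delta> \<and> consistent (mat \<Gamma> \<union> {\<theta>}) \<and>
          (\<forall>\<Gamma>'. \<Gamma>' \<subseteq> \<Delta> \<and> consistent (mat \<Gamma>' \<union> {\<theta>}) \<longrightarrow> \<not> lex_less \<Delta> \<Gamma> \<Gamma>')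
       \<longrightarrow> entails (mat \<Gamma> \<union> {\<theta>}) \<phi>)"

type_synonym 'v rel = "'v form \<Rightarrow> 'v form \<Rightarrow> bool"

definition strict :: "'v rel \<Rightarrow> 'v form \<Rightarrow> 'v form \<Rightarrow> bool" where
  "strict R a b \<longleftrightarrow> R a b \<and> \<not> R b a"

definition E_relation :: "'v rel \<Rightarrow> bool" where
  "E_relation R \<longleftrightarrow>
     (\<forall>a b c. R a b \<longrightarrow> R b c \<longrightarrow> R a c) \<and>
     (\<forall>a b. entails {a} b \<longrightarrow> R a b) \<and>
     (\<forall>a b. R a (And a b) \<or> R b (And a b)) \<and>
     ((\<exists>c. strict R Bot c) \<longrightarrow> (\<forall>b. (\<forall>a. R a b) \<longrightarrow> valid b))"

definition Bel :: "'v rel \<Rightarrow> 'v form set" where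
  "Bel R = (if \<exists>c. strict R Bot c then {c. strict R Bot c} else UNIV)"

type_synonym 'v seq = "'v world set list"

definition wf_seq :: "'v seq \<Rightarrow> bool" where
  "wf_seq U \<longleftrightarrow> U \<noteq> [] \<and>
     (\<forall>i<length U. \<forall>j<length U. i \<noteq> j \<longrightarrow> U ! i \<inter> U ! j = {})"

definition rank :: "'v seq \<Rightarrow> 'v form \<Rightarrow> enat" where
  "rank U \<theta> = (if \<exists>i<length U. U ! i \<inter> models \<theta> \<noteq> {}
                then enat (LEAST i. i < length U \<and> U ! i \<inter> models \<theta> \<noteq> {})
                else \<infinity>)"

definition seq_inf :: "'v seq \<Rightarrow> 'v form \<Rightarrow> 'v form \<Rightarrow> bool" where
  "seq_inf U \<theta> \<phi> \<longleftrightarrow> rank U \<theta> < rank U (And \<theta> (Neg \<phi>)) \<or> rank U \<theta> = \<infinity>"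

definition full :: "'v seq \<Rightarrow> bool" where
  "full U \<longleftrightarrow> (\<Union>i<length U. U ! i) = UNIV"

definition empty_seq :: "'v seq \<Rightarrow> bool" where
  "empty_seq U \<longleftrightarrow> (\<Union>i<length U. U ! i) = {}"

definition Upsilon :: "'v seq set" where
  "Upsilon = {U. wf_seq U \<and> (full U \<or> empty_seq U)}"

definition seq_rel :: "'v seq \<Rightarrow> 'v rel" where
  "seq_rel U \<theta> \<phi> \<longleftrightarrow> \<not> seq_inf U (Or (Neg \<theta>) (Neg \<phi>)) \<theta> \<or> seq_inf U (Neg \<phi>) Bot"

definition seq_rev :: "'v seq \<Rightarrow> 'v seq \<Rightarrow> 'v seq" where
  "seq_rev U V = (if full U then concat (map (\<lambda>v. map (\<lambda>u. u \<inter> v) U) V) else V)"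

definition erev :: "'v rel \<Rightarrow> 'v rel \<Rightarrow> 'v rel" where
  "erev K E = (SOME R. \<exists>U V. U \<in> Upsilon \<and> V \<in> Upsilon \<and>
                 K = seq_rel U \<and> E = seq_rel V \<and> R = seq_rel (seq_rev U V))"

definition gen_less :: "'v form set \<Rightarrow> 'v form \<Rightarrow> 'v form \<Rightarrow> bool" where
  "gen_less E \<theta> \<phi> \<longleftrightarrow> consistent E \<and> \<not> valid \<theta> \<and>
     (\<forall>E'. E' \<subseteq> E \<and> consistent (E' \<union> {Neg \<phi>}) \<longrightarrow>
        (\<exists>E''. E'' \<subseteq> E \<and> card E' < card E'' \<and> consistent (E'' \<union> {Neg \<theta>})))"

definition gen_le :: "'v form set \<Rightarrow> 'v rel" where
  "gen_le E \<theta> \<phi> \<longleftrightarrow> \<not> gen_less E \<phi> \<theta>"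

text \<open>revchain Delta (i+1) = ((...(gen_le {} * gen_le Delta_0^->) * ...) * gen_le Delta_i^->).\<close>
primrec revchain :: "'v default set \<Rightarrow> nat \<Rightarrow> 'v rel" where
  "revchain \<Delta> 0 = gen_le {}"
| "revchain \<Delta> (Suc i) = erev (revchain \<Delta> i) (gen_le (mat (zlayer \<Delta> i)))"

end

theory Submission
  imports Defs
begin

lemma cons_iff: "consistent S \<longleftrightarrow> (\<exists>w. \<forall>f\<in>S. sat w f)"
  unfolding consistent_def entails_def models_def by auto

lemma entails_iff: "entails S \<phi> \<longleftrightarrow> (\<forall>w. (\<forall>f\<in>S. sat w f) \<longrightarrow> sat w \<phi>)"
  unfolding entails_def models_def by auto

lemma valid_iff: "valid \<phi> \<longleftrightarrow> (\<forall>w. sat w \<phi>)"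
  unfolding valid_def entails_def models_def by auto

definition idx :: "'v seq \<Rightarrow> 'v world \<Rightarrow> nat" where
  "idx U w = (LEAST i. i < length U \<and> w \<in> U ! i)"

lemma idx_unique:
  assumes "wf_seq U" "i < length U" "w \<in> U ! i"
  shows "idx U w = i"
  unfolding idx_def
proof (rule Least_equality)
  show "i < length U \<and> w \<in> U ! i" using assms by auto
  fix j assume "j < length U \<and> w \<in> U ! j"
  then have "j = i" using assms unfolding wf_seq_def by blast
  then show "i \<le> j" by simp
qed

lemma idx_props:
  assumes "wf_seq U" "full U"
  shows "idx U w < length U \<and> w \<in> U ! idx U w"
proof -
  from assms(2) obtain i where i: "i < length U" "w \<in> U ! i"
    unfolding full_def by blast
  then show ?thesis using idx_unique[OF assms(1) i] by simp
qed

lemma rank_cong: "(\<And>w. sat w \<psi> \<longleftrightarrow> sat w \<chi>) \<Longrightarrow> rank U \<psi> = rank U \<chi>"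
  unfolding rank_def models_def by simp

lemma rank_le_enat:
  assumes "wf_seq U" "full U"
  shows "rank U \<psi> \<le> enat k \<longleftrightarrow> (\<exists>w. sat w \<psi> \<and> idx U w \<le> k)"
proof (cases "\<exists>i<length U. U ! i \<inter> models \<psi> \<noteq> {}")
  case True
  let ?L = "LEAST i. i < length U \<and> U ! i \<inter> models \<psi> \<noteq> {}"
  have r: "rank U \<psi> = enat ?L" using True unfolding rank_def by simp
  have L: "?L < length U \<and> U ! ?L \<inter> models \<psi> \<noteq> {}"
    using LeastI_ex[of "\<lambda>i. i < length U \<and> U ! i \<inter> models \<psi> \<noteq> {}"] True by blast
  show ?thesis
  proof
    assume "rank U \<psi> \<le> enat k"
    then have "?L \<le> k" using r by simp
    from L obtain w where "w \<in> U ! ?L" "sat w \<psi>" unfolding models_def by auto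
    then have "idx U w = ?L" using idx_unique[OF assms(1)] L by blast
    then show "\<exists>w. sat w \<psi> \<and> idx U w \<le> k" using \<open>?L \<le> k\<close> \<open>sat w \<psi>\<close> by auto
  next
    assume "\<exists>w. sat w \<psi> \<and> idx U w \<le> k"
    then obtain w where w: "sat w \<psi>" "idx U w \<le> k" by blast
    have "idx U w < length U \<and> U ! idx U w \<inter> models \<psi> \<noteq> {}"
      using idx_props[OF assms, of w] w unfolding models_def by auto
    then have "?L \<le> idx U w" by (rule Least_le)
    then show "rank U \<psi> \<le> enat k" using r w by simp
  qed
next
  case False
  then have "rank U \<psi> = \<infinity>" unfolding rank_def by simp
  moreover have "\<not> (\<exists>w. sat w \<psi> \<and> idx U w \<le> k)"
    using False idx_props[OF assms] unfolding models_def by blast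
  ultimately show ?thesis by simp
qed

lemma enat_le_via: "(a::enat) \<le> b \<longleftrightarrow> (\<forall>k. b \<le> enat k \<longrightarrow> a \<le> enat k)"
  by (cases b) (auto intro: order_trans)

lemma enat_eq_via: "(\<And>k. (a::enat) \<le> enat k \<longleftrightarrow> b \<le> enat k) \<Longrightarrow> a = b"
  by (meson antisym enat_le_via)

lemma rank_Or:
  assumes "wf_seq U" "full U"
  shows "rank U (Or a b) = min (rank U a) (rank U b)"
  by (rule enat_eq_via) (auto simp: rank_le_enat[OF assms] min_le_iff_disj)

lemma seq_rel_rank:
  assumes "wf_seq U" "full U"
  shows "seq_rel U \<theta> \<phi> \<longleftrightarrow> rank U (Neg \<theta>) \<le> rank U (Neg \<phi>)"
proof -
  have 1: "rank U (And (Or (Neg \<theta>) (Neg \<phi>)) (Neg \<theta>)) = rank U (Neg \<theta>)"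
    by (rule rank_cong) auto
  have 2: "rank U (And (Neg \<phi>) (Neg Bot)) = rank U (Neg \<phi>)"
    by (rule rank_cong) auto
  show ?thesis unfolding seq_rel_def seq_inf_def 1 2 rank_Or[OF assms]
    by (cases "rank U (Neg \<theta>)"; cases "rank U (Neg \<phi>)") (auto simp: min_def)
qed

lemma seq_rel_full:
  assumes "wf_seq U" "full U"
  shows "seq_rel U \<theta> \<phi> \<longleftrightarrow> (\<forall>w. \<not> sat w \<phi> \<longrightarrow> (\<exists>w'. \<not> sat w' \<theta> \<and> idx U w' \<le> idx U w))"
  unfolding seq_rel_rank[OF assms] enat_le_via[of "rank U (Neg \<theta>)"] rank_le_enat[OF assms]
  by auto (meson order_refl order_trans)+

lemma seq_rel_empty:
  assumes "\<forall>x\<in>set U. x = {}"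
  shows "seq_rel U \<theta> \<phi>"
proof -
  have "rank U (Neg \<phi>) = \<infinity>" using assms unfolding rank_def by auto
  then show ?thesis unfolding seq_rel_def seq_inf_def by simp
qed


lemma length_concat_uniform:
  assumes "\<forall>v\<in>set V. length (f v) = m"
  shows "length (concat (map f V)) = length V * m"
  using assms by (induction V) auto

lemma nth_concat_uniform:
  assumes "\<forall>v\<in>set V. length (f v) = m" "i < m" "j < length V"
  shows "concat (map f V) ! (j * m + i) = f (V ! j) ! i"
  using assms
proof (induction V arbitrary: j)
  case Nil then show ?case by simp
next
  case (Cons a V)
  show ?case
  proof (cases j)
    case 0 then show ?thesis using Cons.prems by (simp add: nth_append)
  next
    case (Suc j')
    have "concat (map f (a # V)) ! (j * m + i) = concat (map f V) ! (j' * m + i)"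
      using Cons.prems Suc by (simp add: nth_append)
    also have "\<dots> = f (V ! j') ! i" using Cons Suc by simp
    finally show ?thesis using Suc by simp
  qed
qed

lemma lex_arith:
  assumes "(i::nat) < m" "i' < m"
  shows "j' * m + i' \<le> j * m + i \<longleftrightarrow> j' < j \<or> (j' = j \<and> i' \<le> i)"
proof -
  have A: "j' * m + i' < j * m + i" if "j' < j"
  proof -
    have "Suc j' * m \<le> j * m" using that by (intro mult_le_mono1) simp
    then show ?thesis using assms by simp
  qed
  have B: "j * m + i < j' * m + i'" if "j < j'"
  proof -
    have "Suc j * m \<le> j' * m" using that by (intro mult_le_mono1) simp
    then show ?thesis using assms by simp
  qed
  show ?thesis using A B by (cases "j' < j"; cases "j < j'") auto
qed

lemma seq_rev_ok:
  assumes "wf_seq U" "full U" "wf_seq V" "full V"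
  shows "wf_seq (seq_rev U V) \<and> full (seq_rev U V) \<and>
         (\<forall>w. idx (seq_rev U V) w = idx V w * length U + idx U w)"
proof -
  let ?f = "\<lambda>v. map (\<lambda>u. u \<inter> v) U"
  let ?W = "concat (map ?f V)"
  define m where "m = length U"
  have W: "seq_rev U V = ?W" using assms(2) unfolding seq_rev_def by simp
  have len: "\<forall>v\<in>set V. length (?f v) = m" unfolding m_def by simp
  have m0: "m > 0" using assms(1) unfolding wf_seq_def m_def by simp
  have lenW: "length ?W = length V * m" using length_concat_uniform[OF len] .
  have nthW: "?W ! (j * m + i) = U ! i \<inter> V ! j" if "i < m" "j < length V" for i j
    using nth_concat_uniform[OF len that] that unfolding m_def by simp
  have dec: "k div m < length V \<and> k mod m < m \<and> k = k div m * m + k mod m \<and>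
             ?W ! k = U ! (k mod m) \<inter> V ! (k div m)" if "k < length ?W" for k
  proof -
    have "k div m < length V" using that lenW m0 by (simp add: less_mult_imp_div_less)
    moreover have "k mod m < m" using m0 by simp
    moreover have "k = k div m * m + k mod m" by simp
    ultimately show ?thesis using nthW by metis
  qed
  have wfW: "wf_seq ?W"
    unfolding wf_seq_def
  proof (intro conjI allI impI)
    have "length ?W > 0" using lenW m0 assms(3) unfolding wf_seq_def by simp
    then show "?W \<noteq> []" by (metis length_greater_0_conv)
    fix k k' assume k: "k < length ?W" "k' < length ?W" "k \<noteq> k'"
    have "k mod m \<noteq> k' mod m \<or> k div m \<noteq> k' div m" using dec k by metis
    then show "?W ! k \<inter> ?W ! k' = {}"
    proof
      assume "k mod m \<noteq> k' mod m"
      then have "U ! (k mod m) \<inter> U ! (k' mod m) = {}"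
        using assms(1) dec k unfolding wf_seq_def m_def by blast
      then show ?thesis using dec k by auto
    next
      assume "k div m \<noteq> k' div m"
      then have "V ! (k div m) \<inter> V ! (k' div m) = {}"
        using assms(3) dec k unfolding wf_seq_def by blast
      then show ?thesis using dec k by auto
    qed
  qed
  have idxW: "idx V w * m + idx U w < length ?W \<and> w \<in> ?W ! (idx V w * m + idx U w)" for w
  proof -
    have i: "idx U w < m" "w \<in> U ! idx U w" using idx_props[OF assms(1,2)] unfolding m_def by auto
    have j: "idx V w < length V" "w \<in> V ! idx V w" using idx_props[OF assms(3,4)] by auto
    have "Suc (idx V w) * m \<le> length V * m" using j by (intro mult_le_mono1) simp
    then show ?thesis using i j nthW lenW by auto
  qed
  have fullW: "full ?W" unfolding full_def using idxW by blast
  show ?thesis using W wfW fullW idxW idx_unique[OF wfW] unfolding m_def by metis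
qed

definition viol :: "'v form set \<Rightarrow> 'v world \<Rightarrow> nat" where
  "viol E w = card {f\<in>E. \<not> sat w f}"

definition violseq :: "'v form set \<Rightarrow> 'v seq" where
  "violseq E = map (\<lambda>k. {w. viol E w = k}) [0..<Suc (card E)]"

lemma viol_le: "finite E \<Longrightarrow> viol E w \<le> card E"
  unfolding viol_def by (rule card_mono) auto

lemma violseq_ok:
  assumes "finite E"
  shows "wf_seq (violseq E) \<and> full (violseq E) \<and> (\<forall>w. idx (violseq E) w = viol E w)"
proof -
  have nth: "k < Suc (card E) \<Longrightarrow> violseq E ! k = {w. viol E w = k}" for k
    unfolding violseq_def by (simp del: upt_Suc)
  have len: "length (violseq E) = Suc (card E)" unfolding violseq_def by simp
  have wf: "wf_seq (violseq E)" unfolding wf_seq_def using nth len by auto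
  have mem: "viol E w < length (violseq E) \<and> w \<in> violseq E ! viol E w" for w
    using viol_le[OF assms, of w] nth len by auto
  have "full (violseq E)" unfolding full_def using mem by blast
  then show ?thesis using wf mem idx_unique[OF wf] by metis
qed

lemma gen_le_violseq:
  assumes "finite E" "consistent E"
  shows "gen_le E = seq_rel (violseq E)"
proof (intro ext)
  fix \<theta> \<phi>
  have vs: "wf_seq (violseq E)" "full (violseq E)" "\<And>w. idx (violseq E) w = viol E w"
    using violseq_ok[OF assms(1)] by auto
  define sc where "sc w = card {f\<in>E. sat w f}" for w
  have sum: "sc w + viol E w = card E" for w
  proof -
    have "card ({f\<in>E. sat w f} \<union> {f\<in>E. \<not> sat w f}) = sc w + viol E w"
      unfolding sc_def viol_def by (rule card_Un_disjoint) (use assms(1) in auto)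
    moreover have "{f\<in>E. sat w f} \<union> {f\<in>E. \<not> sat w f} = E" by auto
    ultimately show ?thesis by simp
  qed
  define Q where "Q = (\<forall>E'. E' \<subseteq> E \<and> consistent (E' \<union> {Neg \<theta>}) \<longrightarrow>
        (\<exists>E''. E'' \<subseteq> E \<and> card E' < card E'' \<and> consistent (E'' \<union> {Neg \<phi>})))"
  have Q: "Q \<longleftrightarrow> (\<forall>w'. \<not> sat w' \<theta> \<longrightarrow> (\<exists>w. \<not> sat w \<phi> \<and> viol E w < viol E w'))"
  proof
    assume q: Q
    show "\<forall>w'. \<not> sat w' \<theta> \<longrightarrow> (\<exists>w. \<not> sat w \<phi> \<and> viol E w < viol E w')"
    proof (intro allI impI)
      fix w' assume w': "\<not> sat w' \<theta>"
      have "consistent ({f\<in>E. sat w' f} \<union> {Neg \<theta>})" unfolding cons_iff using w' by auto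
      then obtain E'' where E'': "E'' \<subseteq> E" "sc w' < card E''" "consistent (E'' \<union> {Neg \<phi>})"
        using q unfolding Q_def sc_def by (metis (no_types, lifting) mem_Collect_eq subsetI)
      then obtain w where w: "\<forall>f\<in>E''. sat w f" "\<not> sat w \<phi>" unfolding cons_iff by auto
      have "card E'' \<le> sc w" unfolding sc_def
        by (rule card_mono) (use assms(1) E'' w in auto)
      then show "\<exists>w. \<not> sat w \<phi> \<and> viol E w < viol E w'"
        using w E'' sum[of w] sum[of w'] by (intro exI[of _ w]) auto
    qed
  next
    assume h: "\<forall>w'. \<not> sat w' \<theta> \<longrightarrow> (\<exists>w. \<not> sat w \<phi> \<and> viol E w < viol E w')"
    show Q unfolding Q_def
    proof (intro allI impI)
      fix E' assume E': "E' \<subseteq> E \<and> consistent (E' \<union> {Neg \<theta>})"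
      then obtain w' where w': "\<forall>f\<in>E'. sat w' f" "\<not> sat w' \<theta>" unfolding cons_iff by auto
      have c: "card E' \<le> sc w'" unfolding sc_def
        by (rule card_mono) (use assms(1) E' w' in auto)
      obtain w where w: "\<not> sat w \<phi>" "viol E w < viol E w'" using h w' by blast
      show "\<exists>E''. E'' \<subseteq> E \<and> card E' < card E'' \<and> consistent (E'' \<union> {Neg \<phi>})"
        apply (rule exI[of _ "{f\<in>E. sat w f}"])
        using w c sum[of w] sum[of w'] unfolding sc_def cons_iff by auto
    qed
  qed
  have L: "gen_le E \<theta> \<phi> \<longleftrightarrow> \<not> (\<not> valid \<phi> \<and> Q)"
    unfolding gen_le_def gen_less_def Q_def using assms(2) by simp
  have R: "seq_rel (violseq E) \<theta> \<phi> \<longleftrightarrow>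
      (\<forall>w. \<not> sat w \<phi> \<longrightarrow> (\<exists>w'. \<not> sat w' \<theta> \<and> viol E w' \<le> viol E w))"
    using seq_rel_full[OF vs(1,2)] vs(3) by simp
  show "gen_le E \<theta> \<phi> = seq_rel (violseq E) \<theta> \<phi>"
    unfolding L R Q valid_iff
  proof
    assume a: "\<not> (\<not> (\<forall>w. sat w \<phi>) \<and> (\<forall>w'. \<not> sat w' \<theta> \<longrightarrow> (\<exists>w. \<not> sat w \<phi> \<and> viol E w < viol E w')))"
    then show "\<forall>w. \<not> sat w \<phi> \<longrightarrow> (\<exists>w'. \<not> sat w' \<theta> \<and> viol E w' \<le> viol E w)"
    proof (intro allI impI)
      fix w assume w: "\<not> sat w \<phi>"
      then obtain w' where "\<not> sat w' \<theta>" "\<forall>x. \<not> sat x \<phi> \<longrightarrow> \<not> viol E x < viol E w'"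
        using a by blast
      then show "\<exists>w'. \<not> sat w' \<theta> \<and> viol E w' \<le> viol E w" using w not_le by blast
    qed
  next
    assume a: "\<forall>w. \<not> sat w \<phi> \<longrightarrow> (\<exists>w'. \<not> sat w' \<theta> \<and> viol E w' \<le> viol E w)"
    show "\<not> (\<not> (\<forall>w. sat w \<phi>) \<and> (\<forall>w'. \<not> sat w' \<theta> \<longrightarrow> (\<exists>w. \<not> sat w \<phi> \<and> viol E w < viol E w')))"
    proof
      assume b: "\<not> (\<forall>w. sat w \<phi>) \<and> (\<forall>w'. \<not> sat w' \<theta> \<longrightarrow> (\<exists>w. \<not> sat w \<phi> \<and> viol E w < viol E w'))"
      then have "\<exists>w. \<not> sat w \<phi>" by blast
      then obtain w0 where w0: "\<not> sat w0 \<phi>" "\<forall>w. \<not> sat w \<phi> \<longrightarrow> viol E w0 \<le> viol E w"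
        using ex_has_least_nat[of "\<lambda>w. \<not> sat w \<phi>" _ "viol E"] by blast
      obtain w' where "\<not> sat w' \<theta>" "viol E w' \<le> viol E w0" using a w0 by blast
      then show False using b w0 by fastforce
    qed
  qed
qed


lemma sat_foldr_lits:
  "sat x (foldr (\<lambda>p acc. And (if w p then Var p else Neg (Var p)) acc) xs Top)
     \<longleftrightarrow> (\<forall>p\<in>set xs. x p = w p)"
  by (induction xs) auto

lemma exists_char:
  fixes w :: "('v::finite) world"
  shows "\<exists>c. \<forall>x. sat x c \<longleftrightarrow> x = w"
proof -
  obtain xs :: "'v list" where "set xs = UNIV" using finite_list[of "UNIV :: 'v set"] finite_UNIV by blast
  then show ?thesis using sat_foldr_lits[of _ w xs] by (intro exI) (auto simp: fun_eq_iff)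
qed

lemma Ups_cases:
  assumes "U \<in> Upsilon"
  shows "wf_seq U \<and> (full U \<or> (\<forall>x\<in>set U. x = {}))"
proof -
  have "empty_seq U \<Longrightarrow> \<forall>x\<in>set U. x = {}"
    unfolding empty_seq_def by (auto simp: in_set_conv_nth)
  then show ?thesis using assms unfolding Upsilon_def by auto
qed

lemma full_det:
  assumes "U \<in> Upsilon"
  shows "full U \<longleftrightarrow> \<not> seq_rel U Top Bot"
proof
  assume f: "full U"
  have "wf_seq U" using assms Ups_cases by blast
  then show "\<not> seq_rel U Top Bot" using seq_rel_full[OF _ f] by simp
next
  assume "\<not> seq_rel U Top Bot"
  then show "full U" using Ups_cases[OF assms] seq_rel_empty by blast
qed

lemma idx_det:
  fixes U U' :: "('v::finite) seq"
  assumes "wf_seq U" "full U" "wf_seq U'" "full U'" "seq_rel U = seq_rel U'"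
  shows "idx U w' \<le> idx U w \<longleftrightarrow> idx U' w' \<le> idx U' w"
proof -
  obtain c where c: "\<forall>x. sat x c \<longleftrightarrow> x = w" using exists_char by blast
  obtain c' where c': "\<forall>x. sat x c' \<longleftrightarrow> x = w'" using exists_char by blast
  have "seq_rel U (Neg c') (Neg c) \<longleftrightarrow> idx U w' \<le> idx U w"
    using seq_rel_full[OF assms(1,2)] c c' by simp
  moreover have "seq_rel U' (Neg c') (Neg c) \<longleftrightarrow> idx U' w' \<le> idx U' w"
    using seq_rel_full[OF assms(3,4)] c c' by simp
  ultimately show ?thesis using assms(5) by simp
qed

lemma set_seq_rev_empty:
  assumes "\<forall>x\<in>set V. x = {}"
  shows "\<forall>x\<in>set (seq_rev U V). x = {}"
  using assms unfolding seq_rev_def by auto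

lemma erev_eq:
  fixes U0 V0 :: "('v::finite) seq"
  assumes U0: "U0 \<in> Upsilon" "full U0" and V0: "V0 \<in> Upsilon"
  shows "erev (seq_rel U0) (seq_rel V0) = seq_rel (seq_rev U0 V0)"
proof -
  have wfU0: "wf_seq U0" using U0 Ups_cases by blast
  have wfV0: "wf_seq V0" using V0 Ups_cases by blast
  have uniq: "R = seq_rel (seq_rev U0 V0)"
    if "U \<in> Upsilon" "V \<in> Upsilon" "seq_rel U0 = seq_rel U" "seq_rel V0 = seq_rel V"
       "R = seq_rel (seq_rev U V)" for R U V
  proof -
    have fU: "full U" using full_det that(1,3) U0 by metis
    have wfU: "wf_seq U" using that(1) Ups_cases by blast
    have wfV: "wf_seq V" using that(2) Ups_cases by blast
    show ?thesis
    proof (cases "full V0")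
      case True
      then have fV: "full V" using full_det that(2,4) V0 by metis
      have r1: "wf_seq (seq_rev U V)" "full (seq_rev U V)"
        "\<And>w. idx (seq_rev U V) w = idx V w * length U + idx U w"
        using seq_rev_ok[OF wfU fU wfV fV] by auto
      have r0: "wf_seq (seq_rev U0 V0)" "full (seq_rev U0 V0)"
        "\<And>w. idx (seq_rev U0 V0) w = idx V0 w * length U0 + idx U0 w"
        using seq_rev_ok[OF wfU0 U0(2) wfV0 True] by auto
      have iU: "idx U w < length U" "idx U0 w < length U0" for w
        using idx_props wfU fU wfU0 U0(2) by blast+
      have dU: "idx U w' \<le> idx U w \<longleftrightarrow> idx U0 w' \<le> idx U0 w" for w w'
        using idx_det[OF wfU fU wfU0 U0(2)] that(3) by metis
      have dV: "idx V w' \<le> idx V w \<longleftrightarrow> idx V0 w' \<le> idx V0 w" for w w'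
        using idx_det[OF wfV fV wfV0 True] that(4) by metis
      have key: "idx (seq_rev U V) w' \<le> idx (seq_rev U V) w \<longleftrightarrow>
                 idx (seq_rev U0 V0) w' \<le> idx (seq_rev U0 V0) w" for w w'
      proof -
        have "idx (seq_rev U V) w' \<le> idx (seq_rev U V) w \<longleftrightarrow>
              idx V w' < idx V w \<or> (idx V w' = idx V w \<and> idx U w' \<le> idx U w)"
          unfolding r1(3) by (rule lex_arith) (use iU in auto)
        also have "\<dots> \<longleftrightarrow> (idx V w' \<le> idx V w \<and> \<not> idx V w \<le> idx V w') \<or>
              (idx V w' \<le> idx V w \<and> idx V w \<le> idx V w' \<and> idx U w' \<le> idx U w)" by auto
        also have "\<dots> \<longleftrightarrow> (idx V0 w' \<le> idx V0 w \<and> \<not> idx V0 w \<le> idx V0 w') \<or>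
              (idx V0 w' \<le> idx V0 w \<and> idx V0 w \<le> idx V0 w' \<and> idx U0 w' \<le> idx U0 w)"
          using dU dV by metis
        also have "\<dots> \<longleftrightarrow> idx V0 w' < idx V0 w \<or> (idx V0 w' = idx V0 w \<and> idx U0 w' \<le> idx U0 w)"
          by auto
        also have "\<dots> \<longleftrightarrow> idx (seq_rev U0 V0) w' \<le> idx (seq_rev U0 V0) w"
          unfolding r0(3) by (rule lex_arith[symmetric]) (use iU in auto)
        finally show ?thesis .
      qed
      show ?thesis unfolding that(5)
        by (intro ext) (simp add: seq_rel_full[OF r1(1,2)] seq_rel_full[OF r0(1,2)] key)
    next
      case False
      then have e0: "\<forall>x\<in>set V0. x = {}" using Ups_cases V0 by blast
      have "\<not> full V" using full_det that(2,4) V0 False by metis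
      then have e: "\<forall>x\<in>set V. x = {}" using Ups_cases that(2) by blast
      show ?thesis unfolding that(5)
        using seq_rel_empty[OF set_seq_rev_empty[OF e]] seq_rel_empty[OF set_seq_rev_empty[OF e0]]
        by (intro ext) simp
    qed
  qed
  show ?thesis unfolding erev_def
    by (rule someI2[where a = "seq_rel (seq_rev U0 V0)"]) (use U0 V0 uniq in blast)+
qed


lemma mat_image: "mat \<Gamma> = (\<lambda>d. Imp (fst d) (snd d)) ` \<Gamma>"
  unfolding mat_def by force

lemma sat_mat: "(\<forall>f\<in>mat \<Gamma>. sat u f) \<longleftrightarrow> (\<forall>d\<in>\<Gamma>. sat u (Imp (fst d) (snd d)))"
  unfolding mat_image by auto

lemma zrest_sub: "zrest \<Delta> i \<subseteq> \<Delta>"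
  by (induction i) auto

lemma zlayer_sub: "zlayer \<Delta> i \<subseteq> \<Delta>"
  using zrest_sub unfolding zlayer_def by blast

lemma zrest_Suc: "zrest \<Delta> (Suc i) = zrest \<Delta> i - zlayer \<Delta> i"
  unfolding zlayer_def by simp

lemma zrest_Suc_eq: "zrest \<Delta> (Suc i) = \<Delta> - (\<Union>k\<le>i. zlayer \<Delta> k)"
proof (induction i)
  case 0 then show ?case by (simp add: zlayer_def)
next
  case (Suc i)
  then show ?case unfolding zrest_Suc[of _ "Suc i"] by (auto simp: atMost_Suc)
qed

lemma zlayer_beyond:
  assumes "has_zpartition \<Delta> n" "n < j"
  shows "zlayer \<Delta> j = {}"
proof -
  have e: "zrest \<Delta> (Suc n) = {}" using assms(1) zrest_Suc_eq[of \<Delta> n]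
    unfolding has_zpartition_def by simp
  have anti: "zrest \<Delta> (k + m) \<subseteq> zrest \<Delta> k" for k m
    by (induction m) (auto simp: zrest_Suc)
  have "zrest \<Delta> j \<subseteq> zrest \<Delta> (Suc n)"
    using anti[of "Suc n" "j - Suc n"] assms(2) by simp
  then show ?thesis using e unfolding zlayer_def by blast
qed

lemma cons_mono: "S \<subseteq> T \<Longrightarrow> consistent T \<Longrightarrow> consistent S"
  unfolding cons_iff by blast

primrec chain :: "'v default set \<Rightarrow> nat \<Rightarrow> 'v seq" where
  "chain \<Delta> 0 = violseq {}"
| "chain \<Delta> (Suc i) = seq_rev (chain \<Delta> i) (violseq (mat (zlayer \<Delta> i)))"

lemma chain_ok:
  fixes \<Delta> :: "('v::finite) default set"
  assumes "finite \<Delta>" "consistent (mat \<Delta>)"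
  shows "wf_seq (chain \<Delta> i) \<and> full (chain \<Delta> i) \<and> revchain \<Delta> i = seq_rel (chain \<Delta> i)"
proof (induction i)
  case 0
  have "consistent ({} :: 'v form set)" unfolding cons_iff by simp
  then have "gen_le {} = seq_rel (violseq ({}::'v form set))"
    by (intro gen_le_violseq) auto
  then show ?case using violseq_ok[of "{}::'v form set"] by simp
next
  case (Suc i)
  let ?E = "mat (zlayer \<Delta> i)"
  have fE: "finite ?E" unfolding mat_image using assms(1) zlayer_sub
    by (meson finite_imageI finite_subset)
  have "?E \<subseteq> mat \<Delta>" unfolding mat_image using zlayer_sub by (rule image_mono)
  then have cE: "consistent ?E" using cons_mono[OF _ assms(2)] by blast
  have v: "wf_seq (violseq ?E)" "full (violseq ?E)" using violseq_ok[OF fE] by auto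
  have ups: "chain \<Delta> i \<in> Upsilon" "violseq ?E \<in> Upsilon" using Suc v unfolding Upsilon_def by auto
  have "revchain \<Delta> (Suc i) = erev (seq_rel (chain \<Delta> i)) (seq_rel (violseq ?E))"
    using Suc gen_le_violseq[OF fE cE] by simp
  also have "\<dots> = seq_rel (chain \<Delta> (Suc i))" using erev_eq[OF ups(1) _ ups(2)] Suc by simp
  finally show ?case using seq_rev_ok[of "chain \<Delta> i" "violseq ?E"] Suc v by simp
qed

lemma lex_arith_less:
  assumes "(i::nat) < m" "i' < m"
  shows "j * m + i < j' * m + i' \<longleftrightarrow> j < j' \<or> (j = j' \<and> i < i')"
proof -
  have "j' * m + i' \<le> j * m + i \<longleftrightarrow> j' < j \<or> (j' = j \<and> i' \<le> i)" by (rule lex_arith[OF assms])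
  then show ?thesis by auto
qed

lemma chain_less:
  fixes \<Delta> :: "('v::finite) default set"
  assumes "finite \<Delta>" "consistent (mat \<Delta>)"
  shows "idx (chain \<Delta> i) u < idx (chain \<Delta> i) v \<longleftrightarrow>
    (\<exists>k<i. viol (mat (zlayer \<Delta> k)) u < viol (mat (zlayer \<Delta> k)) v \<and>
       (\<forall>j. k < j \<and> j < i \<longrightarrow> viol (mat (zlayer \<Delta> j)) u = viol (mat (zlayer \<Delta> j)) v))"
proof (induction i)
  case 0
  then show ?case using violseq_ok[of "{}::'v form set"] by (simp add: viol_def)
next
  case (Suc i)
  let ?E = "mat (zlayer \<Delta> i)"
  let ?d = "\<lambda>k w. viol (mat (zlayer \<Delta> k)) w"
  have fE: "finite ?E" unfolding mat_image using assms(1) zlayer_sub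
    by (meson finite_imageI finite_subset)
  have c: "wf_seq (chain \<Delta> i)" "full (chain \<Delta> i)" using chain_ok[OF assms] by auto
  have v: "wf_seq (violseq ?E)" "full (violseq ?E)" "\<And>w. idx (violseq ?E) w = viol ?E w"
    using violseq_ok[OF fE] by auto
  have ix: "idx (chain \<Delta> (Suc i)) w = viol ?E w * length (chain \<Delta> i) + idx (chain \<Delta> i) w" for w
    using seq_rev_ok[OF c v(1,2)] v(3) by simp
  have b: "idx (chain \<Delta> i) w < length (chain \<Delta> i)" for w using idx_props[OF c] by blast
  have "idx (chain \<Delta> (Suc i)) u < idx (chain \<Delta> (Suc i)) v \<longleftrightarrow>
        ?d i u < ?d i v \<or> (?d i u = ?d i v \<and> idx (chain \<Delta> i) u < idx (chain \<Delta> i) v)"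
    unfolding ix by (rule lex_arith_less[OF b b])
  also have "\<dots> \<longleftrightarrow> (\<exists>k<Suc i. ?d k u < ?d k v \<and> (\<forall>j. k < j \<and> j < Suc i \<longrightarrow> ?d j u = ?d j v))"
    (is "?A \<longleftrightarrow> ?B")
  proof
    assume ?A
    then show ?B
    proof
      assume "?d i u < ?d i v" then show ?B by (intro exI[of _ i]) auto
    next
      assume h: "?d i u = ?d i v \<and> idx (chain \<Delta> i) u < idx (chain \<Delta> i) v"
      then obtain k where "k < i" "?d k u < ?d k v" "\<forall>j. k < j \<and> j < i \<longrightarrow> ?d j u = ?d j v"
        using h Suc.IH[THEN iffD1] by blast
      then show ?B using h by (intro exI[of _ k]) (auto simp: less_Suc_eq)
    qed
  next
    assume ?B
    then obtain k where k: "k < Suc i" "?d k u < ?d k v" "\<forall>j. k < j \<and> j < Suc i \<longrightarrow> ?d j u = ?d j v"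
      by blast
    show ?A
    proof (cases "k = i")
      case True then show ?thesis using k by simp
    next
      case False
      then have "k < i" using k by simp
      have "\<exists>k<i. ?d k u < ?d k v \<and> (\<forall>j. k < j \<and> j < i \<longrightarrow> ?d j u = ?d j v)"
        using k \<open>k < i\<close> by (intro exI[of _ k]) auto
      then have "idx (chain \<Delta> i) u < idx (chain \<Delta> i) v" using Suc.IH[THEN iffD2] by blast
      moreover have "?d i u = ?d i v" using k(3) \<open>k < i\<close> by blast
      ultimately show ?thesis by blast
    qed
  qed
  finally show ?case .
qed

definition lexlt :: "(nat \<Rightarrow> nat) \<Rightarrow> (nat \<Rightarrow> nat) \<Rightarrow> bool" where
  "lexlt a b \<longleftrightarrow> (\<exists>i. a i < b i \<and> (\<forall>j>i. a j = b j))"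

lemma lexlt_trans: "lexlt a b \<Longrightarrow> lexlt b c \<Longrightarrow> lexlt a c"
  unfolding lexlt_def
proof (elim exE conjE)
  fix i k assume i: "a i < b i" "\<forall>j>i. a j = b j" and k: "b k < c k" "\<forall>j>k. b j = c j"
  show "\<exists>i. a i < c i \<and> (\<forall>j>i. a j = c j)"
  proof (cases i k rule: linorder_cases)
    case less then show ?thesis using i k by (intro exI[of _ k]) auto
  next
    case equal then show ?thesis using i k by (intro exI[of _ k]) auto
  next
    case greater then show ?thesis using i k by (intro exI[of _ i]) auto
  qed
qed

lemma lexlt_le:
  assumes "\<forall>i. a i \<le> b i" "\<forall>i>n. a i = b i"
  shows "a = b \<or> lexlt a b"
proof (cases "a = b")
  case False
  let ?S = "{i. a i \<noteq> b i}"
  have "?S \<subseteq> {..n}"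
  proof
    fix i assume "i \<in> ?S" then show "i \<in> {..n}" using assms(2) by (cases "i > n") auto
  qed
  then have fin: "finite ?S" using finite_subset by blast
  have ne: "?S \<noteq> {}" using False by auto
  let ?M = "Max ?S"
  have "?M \<in> ?S" using fin ne by (rule Max_in)
  moreover have "\<forall>j>?M. a j = b j" using Max_ge[OF fin] by (meson leD mem_Collect_eq)
  ultimately have "a ?M < b ?M \<and> (\<forall>j>?M. a j = b j)" using assms(1) le_neq_implies_less by blast
  then have "lexlt a b" unfolding lexlt_def by blast
  then show ?thesis by simp
qed simp


definition Gw :: "'v default set \<Rightarrow> 'v world \<Rightarrow> 'v default set" where
  "Gw \<Delta> u = {d\<in>\<Delta>. sat u (Imp (fst d) (snd d))}"

definition cnt :: "'v default set \<Rightarrow> 'v default set \<Rightarrow> nat \<Rightarrow> nat" where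
  "cnt \<Delta> A i = card (A \<inter> zlayer \<Delta> i)"

lemma lex_less_cnt: "lex_less \<Delta> A B = lexlt (cnt \<Delta> A) (cnt \<Delta> B)"
  unfolding lex_less_def lexlt_def cnt_def by simp

lemma viol_mat: "viol (mat D) u = card {d\<in>D. \<not> sat u (Imp (fst d) (snd d))}"
proof -
  have e: "{f\<in>mat D. \<not> sat u f} = (\<lambda>d. Imp (fst d) (snd d)) ` {d\<in>D. \<not> sat u (Imp (fst d) (snd d))}"
    unfolding mat_image by auto
  have "inj_on (\<lambda>d. Imp (fst d) (snd d)) X" for X :: "'a default set"
    by (auto simp: inj_on_def prod_eq_iff)
  then show ?thesis unfolding viol_def e by (simp add: card_image)
qed

lemma cnt_Gw:
  assumes "finite \<Delta>"
  shows "cnt \<Delta> (Gw \<Delta> u) k + viol (mat (zlayer \<Delta> k)) u = card (zlayer \<Delta> k)"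
proof -
  let ?L = "zlayer \<Delta> k"
  have fL: "finite ?L" using assms zlayer_sub finite_subset by blast
  have e: "Gw \<Delta> u \<inter> ?L = {d\<in>?L. sat u (Imp (fst d) (snd d))}"
    unfolding Gw_def using zlayer_sub by blast
  have "card ({d\<in>?L. sat u (Imp (fst d) (snd d))} \<union> {d\<in>?L. \<not> sat u (Imp (fst d) (snd d))})
      = card {d\<in>?L. sat u (Imp (fst d) (snd d))} + card {d\<in>?L. \<not> sat u (Imp (fst d) (snd d))}"
    by (rule card_Un_disjoint) (use fL in auto)
  moreover have "{d\<in>?L. sat u (Imp (fst d) (snd d))} \<union> {d\<in>?L. \<not> sat u (Imp (fst d) (snd d))} = ?L"
    by auto
  ultimately show ?thesis unfolding cnt_def e viol_mat by simp
qed

lemma lex_Gw: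
  fixes \<Delta> :: "('v::finite) default set"
  assumes "finite \<Delta>" "consistent (mat \<Delta>)" "has_zpartition \<Delta> n"
  shows "lex_less \<Delta> (Gw \<Delta> v) (Gw \<Delta> u) \<longleftrightarrow> idx (chain \<Delta> (Suc n)) u < idx (chain \<Delta> (Suc n)) v"
proof -
  let ?d = "\<lambda>k w. viol (mat (zlayer \<Delta> k)) w"
  have s: "cnt \<Delta> (Gw \<Delta> w) k + ?d k w = card (zlayer \<Delta> k)" for w k using cnt_Gw[OF assms(1)] .
  have lt: "cnt \<Delta> (Gw \<Delta> v) k < cnt \<Delta> (Gw \<Delta> u) k \<longleftrightarrow> ?d k u < ?d k v" for k
    using s[of v k] s[of u k] by linarith
  have eq: "cnt \<Delta> (Gw \<Delta> v) k = cnt \<Delta> (Gw \<Delta> u) k \<longleftrightarrow> ?d k u = ?d k v" for k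
    using s[of v k] s[of u k] by linarith
  have z: "?d k w = 0" if "n < k" for k w
    using zlayer_beyond[OF assms(3) that] by (simp add: viol_def mat_def)
  have "lex_less \<Delta> (Gw \<Delta> v) (Gw \<Delta> u) \<longleftrightarrow> (\<exists>k. ?d k u < ?d k v \<and> (\<forall>j>k. ?d j u = ?d j v))"
    unfolding lex_less_cnt lexlt_def lt eq by simp
  also have "\<dots> \<longleftrightarrow> (\<exists>k<Suc n. ?d k u < ?d k v \<and> (\<forall>j. k < j \<and> j < Suc n \<longrightarrow> ?d j u = ?d j v))"
  proof
    assume "\<exists>k. ?d k u < ?d k v \<and> (\<forall>j>k. ?d j u = ?d j v)"
    then obtain k where k: "?d k u < ?d k v" "\<forall>j>k. ?d j u = ?d j v" by blast
    have "k < Suc n" using k(1) z by (metis less_Suc_eq_le not_le less_irrefl)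
    then show "\<exists>k<Suc n. ?d k u < ?d k v \<and> (\<forall>j. k < j \<and> j < Suc n \<longrightarrow> ?d j u = ?d j v)"
      using k by blast
  next
    assume "\<exists>k<Suc n. ?d k u < ?d k v \<and> (\<forall>j. k < j \<and> j < Suc n \<longrightarrow> ?d j u = ?d j v)"
    then obtain k where k: "k < Suc n" "?d k u < ?d k v" "\<forall>j. k < j \<and> j < Suc n \<longrightarrow> ?d j u = ?d j v"
      by blast
    have "\<forall>j>k. ?d j u = ?d j v"
    proof (intro allI impI)
      fix j assume "k < j"
      show "?d j u = ?d j v"
      proof (cases "n < j")
        case True then show ?thesis using z by simp
      next
        case False then show ?thesis using k(3) \<open>k < j\<close> by simp
      qed
    qed
    then show "\<exists>k. ?d k u < ?d k v \<and> (\<forall>j>k. ?d j u = ?d j v)" using k by blast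
  qed
  also have "\<dots> \<longleftrightarrow> idx (chain \<Delta> (Suc n)) u < idx (chain \<Delta> (Suc n)) v"
    by (rule chain_less[OF assms(1,2), symmetric])
  finally show ?thesis .
qed

lemma sub_lex:
  assumes "finite \<Delta>" "has_zpartition \<Delta> n" "A \<subseteq> B" "B \<subseteq> \<Delta>"
  shows "cnt \<Delta> A = cnt \<Delta> B \<or> lex_less \<Delta> A B"
proof -
  have "finite B" using assms finite_subset by blast
  then have "\<forall>i. cnt \<Delta> A i \<le> cnt \<Delta> B i" unfolding cnt_def
    using assms(3) by (intro allI card_mono) auto
  moreover have "\<forall>i>n. cnt \<Delta> A i = cnt \<Delta> B i" unfolding cnt_def
    using zlayer_beyond[OF assms(2)] by simp
  ultimately show ?thesis unfolding lex_less_cnt by (rule lexlt_le)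
qed

lemma lex_mono_r:
  assumes "finite \<Delta>" "has_zpartition \<Delta> n" "lex_less \<Delta> A B" "B \<subseteq> B'" "B' \<subseteq> \<Delta>"
  shows "lex_less \<Delta> A B'"
  using sub_lex[OF assms(1,2,4,5)] assms(3) lexlt_trans unfolding lex_less_cnt by metis

lemma lex_mono_l:
  assumes "finite \<Delta>" "has_zpartition \<Delta> n" "lex_less \<Delta> A' B" "A \<subseteq> A'" "A' \<subseteq> \<Delta>"
  shows "lex_less \<Delta> A B"
  using sub_lex[OF assms(1,2,4,5)] assms(3) lexlt_trans unfolding lex_less_cnt by metis


lemma Bel_full:
  assumes "wf_seq F" "full F"
  shows "Bel (seq_rel F) = {c. \<exists>w. \<forall>w'. \<not> sat w' c \<longrightarrow> idx F w < idx F w'}"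
proof -
  have st: "strict (seq_rel F) Bot c \<longleftrightarrow> (\<exists>w. \<forall>w'. \<not> sat w' c \<longrightarrow> idx F w < idx F w')" for c
    unfolding strict_def seq_rel_full[OF assms] by (auto simp: not_le)
  have "strict (seq_rel F) Bot Top" using st[of Top] by simp
  then have "\<exists>c. strict (seq_rel F) Bot c" by blast
  moreover have "{c. strict (seq_rel F) Bot c} = {c. \<exists>w. \<forall>w'. \<not> sat w' c \<longrightarrow> idx F w < idx F w'}"
    using st by blast
  ultimately show ?thesis unfolding Bel_def by simp
qed

lemma Bel_total: "(\<forall>a b. R a b) \<Longrightarrow> Bel R = UNIV"
  unfolding Bel_def strict_def by simp

theorem corollary1:
  fixes \<Delta> :: "('v::finite) default set" and n :: nat
  assumes "finite \<Delta>"
    and "consistent (mat \<Delta>)"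
    and "has_zpartition \<Delta> n"
  shows "\<forall>\<theta> \<phi>. lex_entails \<Delta> \<theta> \<phi> \<longleftrightarrow>
           \<phi> \<in> Bel (erev (revchain \<Delta> (Suc n)) (gen_le {\<theta>}))"
proof (intro allI)
  fix \<theta> \<phi> :: "'v form"
  define C where "C = chain \<Delta> (Suc n)"
  have c: "wf_seq C" "full C" "revchain \<Delta> (Suc n) = seq_rel C"
    using chain_ok[OF assms(1,2), of "Suc n"] unfolding C_def by auto
  have CU: "C \<in> Upsilon" using c unfolding Upsilon_def by simp
  show "lex_entails \<Delta> \<theta> \<phi> \<longleftrightarrow> \<phi> \<in> Bel (erev (revchain \<Delta> (Suc n)) (gen_le {\<theta>}))"
  proof (cases "consistent {\<theta>}")
    case False
    then have nt: "\<not> sat w \<theta>" for w unfolding cons_iff by auto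
    have g: "gen_le {\<theta>} = seq_rel [{}]"
      by (intro ext) (simp add: gen_le_def gen_less_def False seq_rel_empty)
    have u: "[{}] \<in> (Upsilon :: 'v seq set)"
      unfolding Upsilon_def wf_seq_def empty_seq_def by simp
    have "erev (revchain \<Delta> (Suc n)) (gen_le {\<theta>}) = seq_rel (seq_rev C [{}])"
      unfolding c(3) g by (rule erev_eq[OF CU c(2) u])
    moreover have "\<forall>x\<in>set (seq_rev C [{}]). x = {}" by (rule set_seq_rev_empty) simp
    then have "\<forall>a b. seq_rel (seq_rev C [{}]) a b" using seq_rel_empty by blast
    ultimately have "Bel (erev (revchain \<Delta> (Suc n)) (gen_le {\<theta>})) = UNIV"
      using Bel_total by metis
    moreover have "lex_entails \<Delta> \<theta> \<phi>"
      unfolding lex_entails_def cons_iff using nt by blast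
    ultimately show ?thesis by simp
  next
    case True
    then obtain t where t: "sat t \<theta>" unfolding cons_iff by auto
    define V where "V = violseq {\<theta>}"
    have v: "wf_seq V" "full V" "\<And>w. idx V w = viol {\<theta>} w" "gen_le {\<theta>} = seq_rel V"
      using violseq_ok[of "{\<theta>}"] gen_le_violseq[of "{\<theta>}"] True unfolding V_def by auto
    have VU: "V \<in> Upsilon" using v unfolding Upsilon_def by simp
    define F where "F = seq_rev C V"
    have f: "wf_seq F" "full F" "\<And>w. idx F w = viol {\<theta>} w * length C + idx C w"
      using seq_rev_ok[OF c(1,2) v(1,2)] v(3) unfolding F_def by auto
    have R: "erev (revchain \<Delta> (Suc n)) (gen_le {\<theta>}) = seq_rel F"
      unfolding c(3) v(4) F_def by (rule erev_eq[OF CU c(2) VU])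
    define key where "key w = idx F w" for w
    have B: "Bel (erev (revchain \<Delta> (Suc n)) (gen_le {\<theta>})) =
             {c. \<exists>w. \<forall>w'. \<not> sat w' c \<longrightarrow> key w < key w'}"
      unfolding R key_def by (rule Bel_full[OF f(1,2)])
    have vt: "viol {\<theta>} w = (if sat w \<theta> then 0 else 1)" for w
    proof -
      have "{f\<in>{\<theta>}. \<not> sat w f} = (if sat w \<theta> then {} else {\<theta>})" by auto
      then show ?thesis unfolding viol_def by simp
    qed
    have ib: "idx C w < length C" for w using idx_props[OF c(1,2)] by blast
    have K1: "key u < key w" if "sat u \<theta>" "\<not> sat w \<theta>" for u w
      unfolding key_def f(3) vt using that ib[of u] by simp
    have K2: "key u < key w \<longleftrightarrow> lex_less \<Delta> (Gw \<Delta> w) (Gw \<Delta> u)" if "sat u \<theta>" "sat w \<theta>" for u w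
      unfolding key_def f(3) vt lex_Gw[OF assms] C_def[symmetric] using that by simp
    obtain w0 where w0: "\<forall>w. key w0 \<le> key w"
      using ex_has_least_nat[of "\<lambda>_. True" t key] by blast
    have minsat: "sat w \<theta>" if "\<forall>x. key w \<le> key x" for w
      using K1[OF t, of w] that by (meson not_le)
    have GwD: "Gw \<Delta> w \<subseteq> \<Delta>" for w unfolding Gw_def by blast
    have Gwc: "consistent (mat (Gw \<Delta> w) \<union> {\<theta>})" if "sat w \<theta>" for w
      unfolding cons_iff using that by (intro exI[of _ w]) (auto simp: sat_mat Gw_def)
    have sub: "\<Gamma> \<subseteq> Gw \<Delta> u" if "\<Gamma> \<subseteq> \<Delta>" "\<forall>f\<in>mat \<Gamma>. sat u f" for \<Gamma> u
      using that unfolding sat_mat Gw_def by blast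
    have maxl: "\<not> lex_less \<Delta> (Gw \<Delta> w) \<Gamma>'"
      if mw: "\<forall>x. key w \<le> key x" and G': "\<Gamma>' \<subseteq> \<Delta>" and cG: "consistent (mat \<Gamma>' \<union> {\<theta>})" for w \<Gamma>'
    proof
      assume l: "lex_less \<Delta> (Gw \<Delta> w) \<Gamma>'"
      obtain u where u: "\<forall>f\<in>mat \<Gamma>'. sat u f" "sat u \<theta>" using cG unfolding cons_iff by auto
      have "lex_less \<Delta> (Gw \<Delta> w) (Gw \<Delta> u)"
        using lex_mono_r[OF assms(1,3) l sub[OF G' u(1)] GwD] .
      then have "key u < key w" using K2[OF u(2) minsat[OF mw]] by simp
      then show False using mw by (meson not_le)
    qed
    show ?thesis unfolding B
    proof
      assume le: "lex_entails \<Delta> \<theta> \<phi>"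
      have "\<forall>w'. \<not> sat w' \<phi> \<longrightarrow> key w0 < key w'"
      proof (intro allI impI)
        fix w' assume nw: "\<not> sat w' \<phi>"
        show "key w0 < key w'"
        proof (rule ccontr)
          assume "\<not> key w0 < key w'"
          then have "key w' \<le> key w0" by simp
          then have m: "\<forall>x. key w' \<le> key x" using w0 order_trans by blast
          have s: "sat w' \<theta>" using minsat[OF m] .
          have mx: "\<forall>\<Gamma>'. \<Gamma>' \<subseteq> \<Delta> \<and> consistent (mat \<Gamma>' \<union> {\<theta>}) \<longrightarrow> \<not> lex_less \<Delta> (Gw \<Delta> w') \<Gamma>'"
            using maxl[OF m] by blast
          have "entails (mat (Gw \<Delta> w') \<union> {\<theta>}) \<phi>"
            using le[unfolded lex_entails_def, rule_format, of "Gw \<Delta> w'"] GwD Gwc[OF s] mx by simp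
          moreover have "\<forall>f\<in>mat (Gw \<Delta> w') \<union> {\<theta>}. sat w' f"
            using s by (auto simp: sat_mat Gw_def)
          ultimately show False using nw unfolding entails_iff by blast
        qed
      qed
      then show "\<phi> \<in> {c. \<exists>w. \<forall>w'. \<not> sat w' c \<longrightarrow> key w < key w'}" by blast
    next
      assume "\<phi> \<in> {c. \<exists>w. \<forall>w'. \<not> sat w' c \<longrightarrow> key w < key w'}"
      then obtain w where w: "\<forall>w'. \<not> sat w' \<phi> \<longrightarrow> key w < key w'" by blast
      show "lex_entails \<Delta> \<theta> \<phi>"
        unfolding lex_entails_def
      proof (intro allI impI)
        fix \<Gamma> assume G: "\<Gamma> \<subseteq> \<Delta> \<and> consistent (mat \<Gamma> \<union> {\<theta>}) \<and>
          (\<forall>\<Gamma>'. \<Gamma>' \<subseteq> \<Delta> \<and> consistent (mat \<Gamma>' \<union> {\<theta>}) \<longrightarrow> \<not> lex_less \<Delta> \<Gamma> \<Gamma>')"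
        show "entails (mat \<Gamma> \<union> {\<theta>}) \<phi>"
          unfolding entails_iff
        proof (intro allI impI)
          fix u assume u: "\<forall>f\<in>mat \<Gamma> \<union> {\<theta>}. sat u f"
          show "sat u \<phi>"
          proof (rule ccontr)
            assume "\<not> sat u \<phi>"
            then have "key w < key u" using w by blast
            then have "key w0 < key u" using w0 by (meson le_less_trans)
            moreover have s0: "sat w0 \<theta>" using minsat w0 by blast
            moreover have su: "sat u \<theta>" using u by simp
            ultimately have l: "lex_less \<Delta> (Gw \<Delta> u) (Gw \<Delta> w0)" using K2 by simp
            have G1: "\<Gamma> \<subseteq> \<Delta>" using G by simp
            have "\<forall>f\<in>mat \<Gamma>. sat u f" using u by simp
            then have "\<Gamma> \<subseteq> Gw \<Delta> u" using sub[OF G1] by simp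
            then have "lex_less \<Delta> \<Gamma> (Gw \<Delta> w0)"
              using lex_mono_l[OF assms(1,3) l _ GwD] by simp
            moreover have "\<not> lex_less \<Delta> \<Gamma> (Gw \<Delta> w0)"
              using G GwD[of w0] Gwc[OF s0] by simp
            ultimately show False by simp
          qed
        qed
      qed
    qed
  qed
qed

end
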